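(* Let $0<2\delta\le\kappa<\lambda\le1$, $0<\epsilon<1/2$, and let $n$ be a positive integer. Put \[ D_0=\frac{\lambda\log(n)^2}{\epsilon}\,2^{\sqrt{\lambda\log(n)\log\left(\frac{\lambda\log(n)^2}{\epsilon}\right)/3}},\qquad M_0=D_0^2\,n^{\lambda}\,2^{\sqrt{3\lambda\log(n)\log\left(\frac{\lambda\log(n)^2}{\epsilon}\right)}} \] (logarithms base $2$). Suppose $\mathcal{G}$ is an $(n,M,D,n^{\lambda},(1-\epsilon)D)$-bipartite expander with $D\le D_0$ and $M\le M_0$, and that a Hadamard matrix $\mathbf{H}_M$ of order $M$ is given. Let $\mathbf{Q}$ be the pooling matrix constructed from $\mathcal{G}$ and $\mathbf{H}_M$. Then for every $\bm{z}\in\{0,\pm1\}^n$ with $n^{\kappa}\le\lVert\bm{z}\rVert_0\le n^{\lambda}$ we have $\lVert\mathbf{Q}\bm{z}\rVert_\infty\ge\sqrt{1-2\epsilon}\,n^{\delta}$, and the number of rows (pooling complexity) of $\mathbf{Q}$ is \[ MD\ \le\ n^{\lambda}\left(\frac{\lambda\log(n)^2}{\epsilon}\right)^3 4^{\sqrt{3\lambda\log(n)\log\left(\frac{\lambda\log(n)^2}{\epsilon}\right)}}. \]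
   Context: A bipartite graph $\mathcal{G}=([N],[M],\mathsf{E})$ is left-$D$-regular if each left vertex has exactly $D$ neighbours; $\Gamma(S)$ is the set of neighbours of $S\subseteq[N]$. It is an $(N,M,D,K,A)$-bipartite expander if it is left-$D$-regular and $|\Gamma(S)|\ge A|S|$ for all $S\subseteq[N]$ with $|S|\le K$. The induced matrix $\mathbf{B}_{\mathcal{G}}\in\{0,1\}^{M\times N}$ has $(j,i)$-entry $1$ iff $(i,j)\in\mathsf{E}$. A Hadamard matrix of order $M$ is an $M\times M$ $\pm1$-matrix with $\mathbf{H}_M^{\intercal}\mathbf{H}_M=M\mathbf{I}$. Construction of $\mathbf{Q}$: write $\mathbf{B}_{\mathcal{G}}=\sum_{i=1}^D\mathbf{B}_i$ with each $\mathbf{B}_i\in\{0,1\}^{M\times N}$ having exactly one nonzero entry per column; set $\mathbf{D}_i=\mathbf{H}_M\mathbf{B}_i$ and stack $\mathbf{Q}=[\mathbf{D}_1;\dots;\mathbf{D}_D]$ vertically (an $MD\times N$ matrix). $\lVert\cdot\rVert_0$ counts nonzero entries; $\lVert\cdot\rVert_\infty$ is the max absolute entry. *)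

theory Defs
  imports Complex_Main
begin

text \<open>Bipartite graphs G = ([N],[M],E): left vertices 0..<N, right vertices 0..<M,
  edge set E of pairs (left, right).\<close>

definition nbhd :: "(nat \<times> nat) set \<Rightarrow> nat set \<Rightarrow> nat set" where
  "nbhd E S = {j. \<exists>i\<in>S. (i, j) \<in> E}"

definition left_regular :: "nat \<Rightarrow> nat \<Rightarrow> nat \<Rightarrow> (nat \<times> nat) set \<Rightarrow> bool" where
  "left_regular N M D E \<longleftrightarrow>
     E \<subseteq> {0..<N} \<times> {0..<M} \<and> (\<forall>i<N. card (nbhd E {i}) = D)"

definition bip_expander ::
  "nat \<Rightarrow> nat \<Rightarrow> nat \<Rightarrow> real \<Rightarrow> real \<Rightarrow> (nat \<times> nat) set \<Rightarrow> bool" where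
  "bip_expander N M D K A E \<longleftrightarrow> left_regular N M D E \<and>
     (\<forall>S. S \<subseteq> {0..<N} \<longrightarrow> real (card S) \<le> K \<longrightarrow>
          real (card (nbhd E S)) \<ge> A * real (card S))"

definition induced_matrix :: "(nat \<times> nat) set \<Rightarrow> nat \<Rightarrow> nat \<Rightarrow> real" where
  "induced_matrix E j i = (if (i, j) \<in> E then 1 else 0)"

definition hadamard :: "nat \<Rightarrow> (nat \<Rightarrow> nat \<Rightarrow> real) \<Rightarrow> bool" where
  "hadamard M H \<longleftrightarrow>
     (\<forall>a<M. \<forall>b<M. H a b = 1 \<or> H a b = -1) \<and>
     (\<forall>a<M. \<forall>b<M. (\<Sum>k<M. H k a * H k b) = (if a = b then real M else 0))"

text \<open>A decomposition B_G = sum_{i<D} B_i where each B_i is a 0/1 M x N matrix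
  with exactly one nonzero entry per column (indices i = 0..<D instead of 1..D).\<close>
definition valid_decomposition ::
  "nat \<Rightarrow> nat \<Rightarrow> nat \<Rightarrow> (nat \<times> nat) set \<Rightarrow> (nat \<Rightarrow> nat \<Rightarrow> nat \<Rightarrow> real) \<Rightarrow> bool" where
  "valid_decomposition N M D E Bs \<longleftrightarrow>
     (\<forall>i<D. (\<forall>r<M. \<forall>c<N. Bs i r c = 0 \<or> Bs i r c = 1) \<and>
            (\<forall>c<N. card {r\<in>{0..<M}. Bs i r c \<noteq> 0} = 1)) \<and>
     (\<forall>r<M. \<forall>c<N. (\<Sum>i<D. Bs i r c) = induced_matrix E r c)"

text \<open>The pooling matrix Q = [H B_0; ...; H B_{D-1}] (an MD x N matrix):
  row p corresponds to block p div M and row p mod M within the block.\<close>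
definition pool_matrix ::
  "nat \<Rightarrow> (nat \<Rightarrow> nat \<Rightarrow> real) \<Rightarrow> (nat \<Rightarrow> nat \<Rightarrow> nat \<Rightarrow> real) \<Rightarrow> nat \<Rightarrow> nat \<Rightarrow> real" where
  "pool_matrix M H Bs p c = (\<Sum>k<M. H (p mod M) k * Bs (p div M) k c)"

definition mat_vec :: "nat \<Rightarrow> (nat \<Rightarrow> nat \<Rightarrow> real) \<Rightarrow> (nat \<Rightarrow> real) \<Rightarrow> nat \<Rightarrow> real" where
  "mat_vec N A z p = (\<Sum>c<N. A p c * z c)"

definition l0_norm :: "nat \<Rightarrow> (nat \<Rightarrow> real) \<Rightarrow> nat" where
  "l0_norm N z = card {c\<in>{0..<N}. z c \<noteq> 0}"

definition linf_norm :: "nat \<Rightarrow> (nat \<Rightarrow> real) \<Rightarrow> real" where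
  "linf_norm m v = (if m = 0 then 0 else Max ((\<lambda>p. \<bar>v p\<bar>) ` {0..<m}))"

end

theory Submission imports Defs begin

lemma hadamard_row:
  fixes y :: "nat \<Rightarrow> real"
  assumes h: "hadamard M H" and M: "0 < M"
  shows "\<exists>a<M. sqrt (\<Sum>k<M. (y k)^2) \<le> \<bar>\<Sum>k<M. H a k * y k\<bar>"
proof -
  have orth: "\<And>k l. k < M \<Longrightarrow> l < M \<Longrightarrow> (\<Sum>a<M. H a k * H a l) = (if k = l then real M else 0)"
    using h unfolding hadamard_def by blast
  have "(\<Sum>a<M. (\<Sum>k<M. H a k * y k)^2) = (\<Sum>a<M. \<Sum>k<M. \<Sum>l<M. (H a k * y k) * (H a l * y l))"
    by (simp add: power2_eq_square sum_product)
  also have "\<dots> = (\<Sum>k<M. \<Sum>a<M. \<Sum>l<M. (H a k * y k) * (H a l * y l))"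
    by (rule sum.swap)
  also have "\<dots> = (\<Sum>k<M. \<Sum>l<M. \<Sum>a<M. (H a k * y k) * (H a l * y l))"
    by (rule sum.cong[OF refl], rule sum.swap)
  also have "\<dots> = (\<Sum>k<M. \<Sum>l<M. y k * y l * (\<Sum>a<M. H a k * H a l))"
    by (simp add: sum_distrib_left mult_ac)
  also have "\<dots> = (\<Sum>k<M. \<Sum>l<M. y k * y l * (if k = l then real M else 0))"
    by (intro sum.cong refl) (simp add: orth)
  also have "\<dots> = (\<Sum>k<M. y k * y k * real M)"
  proof (intro sum.cong refl)
    fix k assume "k \<in> {..<M}"
    have "(\<Sum>l<M. y k * y l * (if k = l then real M else 0)) = (\<Sum>l<M. if k = l then y k * y k * real M else 0)"
      by (rule sum.cong) auto
    also have "\<dots> = y k * y k * real M" using \<open>k \<in> {..<M}\<close> by (simp add: sum.delta)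
    finally show "(\<Sum>l<M. y k * y l * (if k = l then real M else 0)) = y k * y k * real M" .
  qed
  finally have id: "(\<Sum>a<M. (\<Sum>k<M. H a k * y k)^2) = real M * (\<Sum>k<M. (y k)^2)"
    by (simp add: sum_distrib_left power2_eq_square mult_ac)
  show ?thesis
  proof (rule ccontr)
    assume "\<not> ?thesis"
    hence lt: "\<And>a. a < M \<Longrightarrow> \<bar>\<Sum>k<M. H a k * y k\<bar> < sqrt (\<Sum>k<M. (y k)^2)"
      by (auto simp: not_le)
    have "\<And>a. a \<in> {..<M} \<Longrightarrow> (\<Sum>k<M. H a k * y k)^2 < (\<Sum>k<M. (y k)^2)"
    proof -
      fix a assume "a \<in> {..<M}"
      hence "sqrt ((\<Sum>k<M. H a k * y k)^2) < sqrt (\<Sum>k<M. (y k)^2)" using lt by simp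
      thus "(\<Sum>k<M. H a k * y k)^2 < (\<Sum>k<M. (y k)^2)" by (simp only: real_sqrt_less_iff)
    qed
    hence "(\<Sum>a<M. (\<Sum>k<M. H a k * y k)^2) < of_nat (card {..<M}) * (\<Sum>k<M. (y k)^2)"
      by (intro sum_bounded_above_strict) (use M in auto)
    with id show False by simp
  qed
qed

lemma unique_nb:
  assumes lr: "left_regular n M D E" and Sn: "S \<subseteq> {0..<n}"
  shows "2 * real (card (nbhd E S))
           - real (card {r\<in>{0..<M}. card (S \<inter> {c. (c, r) \<in> E}) = 1}) \<le> real D * real (card S)"
proof -
  define dg where "dg r = card (S \<inter> {c. (c, r) \<in> E})" for r
  have fS: "finite S" using Sn finite_subset by blast
  have Esub: "E \<subseteq> {0..<n} \<times> {0..<M}" and reg: "\<And>i. i < n \<Longrightarrow> card (nbhd E {i}) = D"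
    using lr unfolding left_regular_def by auto
  have degc: "real D = (\<Sum>r\<in>{0..<M}. of_bool ((c, r) \<in> E))" if "c \<in> S" for c
  proof -
    have "nbhd E {c} = {0..<M} \<inter> {r. (c, r) \<in> E}" using Esub unfolding nbhd_def by auto
    moreover have "c < n" using that Sn by auto
    ultimately show ?thesis using reg[of c] by simp
  qed
  have "real D * real (card S) = (\<Sum>c\<in>S. real D)" by simp
  also have "\<dots> = (\<Sum>c\<in>S. \<Sum>r\<in>{0..<M}. of_bool ((c, r) \<in> E))"
    using degc by (intro sum.cong) auto
  also have "\<dots> = (\<Sum>r\<in>{0..<M}. \<Sum>c\<in>S. of_bool ((c, r) \<in> E))" by (rule sum.swap)
  also have "\<dots> = (\<Sum>r\<in>{0..<M}. real (dg r))" using fS by (simp add: dg_def)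
  finally have tot: "real D * real (card S) = (\<Sum>r\<in>{0..<M}. real (dg r))" .
  have nb: "nbhd E S = {0..<M} \<inter> {r. dg r \<noteq> 0}"
  proof (intro set_eqI iffI)
    fix r assume "r \<in> nbhd E S"
    then obtain c where c: "c \<in> S" "(c, r) \<in> E" unfolding nbhd_def by auto
    hence "r < M" using Esub by auto
    moreover have "S \<inter> {c. (c, r) \<in> E} \<noteq> {}" using c by auto
    hence "dg r \<noteq> 0" using fS unfolding dg_def by simp
    ultimately show "r \<in> {0..<M} \<inter> {r. dg r \<noteq> 0}" by simp
  next
    fix r assume "r \<in> {0..<M} \<inter> {r. dg r \<noteq> 0}"
    hence "S \<inter> {c. (c, r) \<in> E} \<noteq> {}" unfolding dg_def by (auto simp del: card_eq_0_iff)
    thus "r \<in> nbhd E S" unfolding nbhd_def by auto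
  qed
  have cG: "real (card (nbhd E S)) = (\<Sum>r\<in>{0..<M}. of_bool (dg r \<noteq> 0))" unfolding nb by simp
  have "{r\<in>{0..<M}. dg r = 1} = {0..<M} \<inter> {r. dg r = 1}" by blast
  hence cU: "real (card {r\<in>{0..<M}. dg r = 1}) = (\<Sum>r\<in>{0..<M}. of_bool (dg r = 1))"
    by simp
  have "(\<Sum>r\<in>{0..<M}. 2 * of_bool (dg r \<noteq> 0) - of_bool (dg r = 1)) \<le> (\<Sum>r\<in>{0..<M}. real (dg r))"
  proof (intro sum_mono)
    fix r
    show "2 * of_bool (dg r \<noteq> 0) - of_bool (dg r = 1) \<le> real (dg r)"
      by (cases "dg r = 0"; cases "dg r = 1") auto
  qed
  hence "2 * real (card (nbhd E S)) - real (card {r\<in>{0..<M}. dg r = 1}) \<le> real D * real (card S)"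
    unfolding tot cG cU by (simp add: sum_subtractf sum_distrib_left)
  thus ?thesis unfolding dg_def by simp
qed

theorem theorem3:
  fixes dl ka la eps :: real and n M D :: nat
    and E :: "(nat \<times> nat) set" and H :: "nat \<Rightarrow> nat \<Rightarrow> real"
    and Bs :: "nat \<Rightarrow> nat \<Rightarrow> nat \<Rightarrow> real"
  defines "L \<equiv> la * (log 2 (real n))\<^sup>2 / eps"
  defines "D0 \<equiv> L * 2 powr sqrt (la * log 2 (real n) * log 2 L / 3)"
  defines "M0 \<equiv> D0\<^sup>2 * real n powr la * 2 powr sqrt (3 * la * log 2 (real n) * log 2 L)"
  assumes "0 < 2 * dl" and "2 * dl \<le> ka" and "ka < la" and "la \<le> 1"
    and "0 < eps" and "eps < 1 / 2"
    and "0 < n"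
    and "0 < D"
    and "bip_expander n M D (real n powr la) ((1 - eps) * real D) E"
    and "real D \<le> D0" and "real M \<le> M0"
    and "hadamard M H"
    and "valid_decomposition n M D E Bs"
  shows "(\<forall>z :: nat \<Rightarrow> real. (\<forall>c<n. z c \<in> {-1, 0, 1}) \<longrightarrow>
            real n powr ka \<le> real (l0_norm n z) \<longrightarrow> real (l0_norm n z) \<le> real n powr la \<longrightarrow>
            linf_norm (M * D) (mat_vec n (pool_matrix M H Bs) z)
              \<ge> sqrt (1 - 2 * eps) * real n powr dl)
         \<and> real (M * D) \<le> real n powr la * L ^ 3
              * 4 powr sqrt (3 * la * log 2 (real n) * log 2 L)"
proof -
  have lr: "left_regular n M D E"
    and exp: "\<And>S. S \<subseteq> {0..<n} \<Longrightarrow> real (card S) \<le> real n powr la \<Longrightarrow>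
               (1 - eps) * real D * real (card S) \<le> real (card (nbhd E S))"
    using assms(12) unfolding bip_expander_def by auto
  have Esub: "E \<subseteq> {0..<n} \<times> {0..<M}" and reg: "\<And>i. i < n \<Longrightarrow> card (nbhd E {i}) = D"
    using lr unfolding left_regular_def by auto
  have Mpos: "0 < M"
  proof -
    have "card (nbhd E {0}) = D" using reg assms(10) by simp
    hence "nbhd E {0} \<noteq> {}" using assms(11) by auto
    then obtain j where "(0, j) \<in> E" unfolding nbhd_def by auto
    thus ?thesis using Esub by auto
  qed
  have Bs01: "\<And>i r c. i < D \<Longrightarrow> r < M \<Longrightarrow> c < n \<Longrightarrow> Bs i r c = 0 \<or> Bs i r c = 1"
    and Bsum: "\<And>r c. r < M \<Longrightarrow> c < n \<Longrightarrow> (\<Sum>i<D. Bs i r c) = induced_matrix E r c"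
    using assms(16) unfolding valid_decomposition_def by auto
  have part1: "linf_norm (M * D) (mat_vec n (pool_matrix M H Bs) z)
              \<ge> sqrt (1 - 2 * eps) * real n powr dl"
    if zv: "\<forall>c<n. z c \<in> {-1, 0, 1}" and lo: "real n powr ka \<le> real (l0_norm n z)"
      and hi: "real (l0_norm n z) \<le> real n powr la" for z
  proof -
    define S where "S = {c\<in>{0..<n}. z c \<noteq> 0}"
    have cS: "card S = l0_norm n z" unfolding S_def l0_norm_def by simp
    have Sn: "S \<subseteq> {0..<n}" unfolding S_def by auto
    define U where "U = {r\<in>{0..<M}. card (S \<inter> {c. (c, r) \<in> E}) = 1}"
    have "(1 - eps) * real D * real (card S) \<le> real (card (nbhd E S))"
      using exp[OF Sn] hi cS by simp
    moreover have "2 * real (card (nbhd E S)) - real (card U) \<le> real D * real (card S)"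
      unfolding U_def by (rule unique_nb[OF lr Sn])
    ultimately have cU: "(1 - 2 * eps) * real D * real (card S) \<le> real (card U)"
      by (simp add: algebra_simps)
    define y where "y i r = (\<Sum>c<n. Bs i r c * z c)" for i r
    have urow: "(\<Sum>i<D. (y i r)^2) = 1" if rU: "r \<in> U" for r
    proof -
      have rM: "r < M" and c1: "card (S \<inter> {c. (c, r) \<in> E}) = 1" using rU unfolding U_def by auto
      then obtain c0 where c0: "S \<inter> {c. (c, r) \<in> E} = {c0}" by (auto simp: card_Suc_eq)
      hence c0S: "c0 \<in> S" and c0E: "(c0, r) \<in> E" by auto
      hence c0n: "c0 < n" using Sn by auto
      have zc0: "z c0 = 1 \<or> z c0 = -1" using zv c0n c0S unfolding S_def by auto
      have zero: "Bs i r c * z c = 0" if "i < D" "c < n" "c \<noteq> c0" for i c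
      proof (cases "z c = 0")
        case False
        hence "c \<in> S" using that unfolding S_def by auto
        hence "(c, r) \<notin> E" using c0 that(3) by auto
        hence "(\<Sum>i<D. Bs i r c) = 0" using Bsum[OF rM that(2)] unfolding induced_matrix_def by simp
        moreover have "\<forall>i\<in>{..<D}. 0 \<le> Bs i r c" using Bs01[OF _ rM that(2)] by force
        ultimately have "\<forall>i\<in>{..<D}. Bs i r c = 0" using sum_nonneg_eq_0_iff[of "{..<D}" "\<lambda>i. Bs i r c"] by simp
        thus ?thesis using that(1) by simp
      qed simp
      have yv: "y i r = Bs i r c0 * z c0" if "i < D" for i
      proof -
        have "y i r = Bs i r c0 * z c0 + (\<Sum>c\<in>{..<n} - {c0}. Bs i r c * z c)"
          unfolding y_def using c0n by (subst sum.remove[of _ c0]) auto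
        also have "(\<Sum>c\<in>{..<n} - {c0}. Bs i r c * z c) = 0"
          using zero[OF that] by (intro sum.neutral) auto
        finally show ?thesis by simp
      qed
      have "(\<Sum>i<D. (y i r)^2) = (\<Sum>i<D. Bs i r c0)"
      proof (intro sum.cong refl)
        fix i assume "i \<in> {..<D}"
        hence "i < D" by simp
        hence "Bs i r c0 = 0 \<or> Bs i r c0 = 1" and "y i r = Bs i r c0 * z c0"
          using yv Bs01[OF _ rM c0n] by auto
        thus "(y i r)^2 = Bs i r c0" using zc0
          by (auto simp: power2_eq_square)
      qed
      also have "\<dots> = 1" using Bsum[OF rM c0n] c0E unfolding induced_matrix_def by simp
      finally show ?thesis .
    qed
    have "real (card U) = (\<Sum>r\<in>U. \<Sum>i<D. (y i r)^2)" using urow by simp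
    also have "\<dots> \<le> (\<Sum>r\<in>{..<M}. \<Sum>i<D. (y i r)^2)"
      by (intro sum_mono2) (auto simp: U_def intro: sum_nonneg)
    also have "\<dots> = (\<Sum>i<D. \<Sum>r<M. (y i r)^2)" by (rule sum.swap)
    finally have tot: "real (card U) \<le> (\<Sum>i<D. \<Sum>r<M. (y i r)^2)" .
    obtain i where iD: "i < D" and iv: "real (card U) / real D \<le> (\<Sum>r<M. (y i r)^2)"
    proof (rule ccontr)
      assume "\<not> thesis"
      hence "\<And>i. i \<in> {..<D} \<Longrightarrow> (\<Sum>r<M. (y i r)^2) < real (card U) / real D"
        using that by (meson lessThan_iff not_le)
      hence "(\<Sum>i<D. \<Sum>r<M. (y i r)^2) < of_nat (card {..<D}) * (real (card U) / real D)"
        by (intro sum_bounded_above_strict) (use assms(11) in auto)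
      with tot assms(11) show False by simp
    qed
    have ge: "(1 - 2 * eps) * real (card S) \<le> (\<Sum>r<M. (y i r)^2)"
    proof -
      have "(1 - 2 * eps) * real (card S) = (1 - 2 * eps) * real D * real (card S) / real D"
        using assms(11) by simp
      also have "\<dots> \<le> real (card U) / real D"
        using cU assms(11) by (intro divide_right_mono) auto
      finally show ?thesis using iv by linarith
    qed
    obtain a where aM: "a < M" and av: "sqrt (\<Sum>r<M. (y i r)^2) \<le> \<bar>\<Sum>k<M. H a k * y i k\<bar>"
      using hadamard_row[OF assms(15) Mpos, of "y i"] by blast
    define p where "p = i * M + a"
    have pMD: "p < M * D"
    proof -
      have "p < i * M + M" using aM p_def by simp
      also have "\<dots> = (i + 1) * M" by simp
      also have "\<dots> \<le> D * M" using iD by (intro mult_right_mono) auto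
      finally show ?thesis by (simp add: mult.commute)
    qed
    have pmod: "p mod M = a" and pdiv: "p div M = i" using aM unfolding p_def by auto
    have mv: "mat_vec n (pool_matrix M H Bs) z p = (\<Sum>k<M. H a k * y i k)"
      unfolding mat_vec_def pool_matrix_def pmod pdiv y_def
      by (simp add: sum_distrib_left sum_distrib_right mult.assoc sum.swap[of _ "{..<n}"])
    have "sqrt (1 - 2 * eps) * real n powr dl = sqrt ((1 - 2 * eps) * real n powr (2 * dl))"
    proof -
      have "real n powr (2 * dl) = (real n powr dl)^2"
        by (simp add: powr_powr[symmetric] power2_eq_square powr_add[symmetric])
      thus ?thesis by (simp add: real_sqrt_mult)
    qed
    also have "\<dots> \<le> sqrt ((1 - 2 * eps) * real (card S))"
    proof -
      have "real n powr (2 * dl) \<le> real n powr ka"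
        using assms(5,10) by (intro powr_mono) auto
      hence "real n powr (2 * dl) \<le> real (card S)" using lo cS by simp
      thus ?thesis using assms(9) by (intro real_sqrt_le_mono mult_left_mono) auto
    qed
    also have "\<dots> \<le> sqrt (\<Sum>r<M. (y i r)^2)" using ge by simp
    also have "\<dots> \<le> \<bar>mat_vec n (pool_matrix M H Bs) z p\<bar>" using av mv by simp
    also have "\<dots> \<le> linf_norm (M * D) (mat_vec n (pool_matrix M H Bs) z)"
      unfolding linf_norm_def using pMD by (auto intro!: Max_ge)
    finally show ?thesis .
  qed
  have part2: "real (M * D) \<le> real n powr la * L ^ 3
              * 4 powr sqrt (3 * la * log 2 (real n) * log 2 L)"
  proof -
    define x where "x = la * log 2 (real n) * log 2 L"
    have D0: "D0 = L * 2 powr sqrt (x / 3)" unfolding D0_def x_def by simp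
    have M0: "M0 = D0\<^sup>2 * real n powr la * 2 powr sqrt (3 * x)" unfolding M0_def x_def by (simp add: mult.assoc)
    have D0pos: "0 \<le> D0" using assms(11,13) by linarith
    have "real (M * D) = real M * real D" by simp
    also have "\<dots> \<le> M0 * D0"
      using assms(14,13) D0pos by (intro mult_mono) auto
    also have "\<dots> = real n powr la * L ^ 3 * ((2 powr sqrt (x / 3)) ^ 3 * 2 powr sqrt (3 * x))"
      unfolding M0 D0 by (simp add: power2_eq_square power3_eq_cube mult_ac)
    also have "(2 powr sqrt (x / 3)) ^ 3 = (2::real) powr sqrt (3 * x)"
    proof -
      have "sqrt (3 * x) = 3 * sqrt (x / 3)"
      proof -
        have e: "3 * x = 3^2 * (x / 3)" by (simp add: power2_eq_square)
        have "sqrt (3 * x) = sqrt (3^2) * sqrt (x / 3)" by (subst e, rule real_sqrt_mult)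
        thus ?thesis by simp
      qed
      hence e3: "sqrt (x / 3) + sqrt (x / 3) + sqrt (x / 3) = sqrt (3 * x)" by simp
      have "(2 powr sqrt (x / 3)) ^ 3 = (2::real) powr (sqrt (x / 3) + sqrt (x / 3) + sqrt (x / 3))"
        by (simp only: power3_eq_cube powr_add)
      thus ?thesis by (simp only: e3)
    qed
    also have "(2::real) powr sqrt (3 * x) * 2 powr sqrt (3 * x) = 4 powr sqrt (3 * x)"
    proof -
      have "(4::real) powr sqrt (3 * x) = (2 powr 2) powr sqrt (3 * x)" by simp
      also have "\<dots> = 2 powr (2 * sqrt (3 * x))" by (rule powr_powr)
      also have "\<dots> = 2 powr (sqrt (3 * x) + sqrt (3 * x))" by simp
      also have "\<dots> = 2 powr sqrt (3 * x) * 2 powr sqrt (3 * x)" by (rule powr_add)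
      finally show ?thesis by simp
    qed
    finally show ?thesis unfolding x_def by (simp add: mult.assoc)
  qed
  show ?thesis using part1 part2 by blast
qed

end
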